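(* Consider a non-explosive stochastic reaction network as in the context with product-form propensities, and fix $T>0$ and $c^*>0$. Suppose that (a) (Property 1 at $(T,c^* )$) for every unconsuming reaction $j \in \mathcal{U}$ there exists $\epsilon_j>0$ with $\mathbb{E}\left(e^{\epsilon_j R_j(T,c^* )}\right) < \infty$; and (b) either reaction $1$ is unconsuming ($1 \in \mathcal{U}$), or $1\in\mathcal{C}$ and for every $y \in [0,\infty)^n$ the set \[ \mathcal{R}_y = \Big\{ \xi = (\xi_j)_{j\in\mathcal{C}} \in [0,\infty)^{\mathcal{C}} : y + \sum_{j\in\mathcal{C}} \nu_j \xi_j \ge 0 \text{ componentwise} \Big\} \] is bounded in the coordinate $\xi_1$, i.e. $\sup\{\xi_1 : \xi \in \mathcal{R}_y\}<\infty$. Then there exists $\epsilon>0$ such that \[ \mathbb{E}\left[ \left(\frac{c^*+\epsilon}{c^*}\right)^{R_1(T,c^* )} \right] < \infty . \]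
   Context: Stochastic reaction network: $n$ species, $m$ reaction channels with stoichiometric vectors $\nu_j = (\nu_{1j},\dots,\nu_{nj}) \in \mathbb{Z}^n$ and propensities of product form $a_j(x,c_j) = c_j b_j(x)$ with $c_j>0$ and $b_j:\mathbb{Z}_+^n\to[0,\infty)$; the parameter of interest is $c=c_1$ with nominal value $c^*$. On a probability space carrying independent unit-rate Poisson processes $Y_1,\dots,Y_m$, $X(t,c) = x_0 + \sum_j \nu_j R_j(t,c)$, $R_j(t,c) = Y_j\left(\int_0^t a_j(X(s,c),c)\,ds\right)$, with fixed $x_0 \in \mathbb{Z}_+^n$; non-explosive means $R_j(t,c)<\infty$ a.s. for all $t,c,j$. A reaction $j$ is called unconsuming if $\nu_{ij}\ge 0$ for all $i=1,\dots,n$, and consuming otherwise; $\mathcal{U}$ and $\mathcal{C}$ denote the index sets of unconsuming and consuming reactions. *)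

theory Defs
  imports "HOL-Probability.Probability"
begin

text \<open>Reactions are indexed by 1..m; species by a finite type 'n.
  Independent unit-rate Poisson processes Y_1..Y_m are realised through their
  i.i.d. Exp(1) inter-arrival times E (j,k), j in 1..m, k in nat.\<close>

definition unit_poisson_family :: "'a measure \<Rightarrow> (nat \<times> nat \<Rightarrow> 'a \<Rightarrow> real) \<Rightarrow> nat \<Rightarrow> bool" where
  "unit_poisson_family M E m \<longleftrightarrow>
     prob_space M \<and>
     prob_space.indep_vars M (\<lambda>_. borel) E ({1..m} \<times> UNIV) \<and>
     (\<forall>j\<in>{1..m}. \<forall>k. distributed M lborel (E (j,k)) (\<lambda>x. ennreal (exponential_density 1 x)))"

definition poisson_count :: "(nat \<times> nat \<Rightarrow> 'a \<Rightarrow> real) \<Rightarrow> nat \<Rightarrow> real \<Rightarrow> 'a \<Rightarrow> nat" where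
  "poisson_count E j u \<omega> = card {k. (\<Sum>i\<le>k. E (j,i) \<omega>) \<le> u}"

definition rate :: "(nat \<Rightarrow> real) \<Rightarrow> real \<Rightarrow> nat \<Rightarrow> real" where
  "rate cc c j = (if j = 1 then c else cc j)"

text \<open>Pathwise random time change representation on [0,\<infinity>), with finite
  (hence non-explosive) counts.\<close>
definition rtc_solution ::
  "nat \<Rightarrow> int^'n \<Rightarrow> (nat \<Rightarrow> int^'n) \<Rightarrow> (nat \<Rightarrow> int^'n \<Rightarrow> real) \<Rightarrow> (nat \<Rightarrow> real)
   \<Rightarrow> (nat \<times> nat \<Rightarrow> 'a \<Rightarrow> real) \<Rightarrow> real \<Rightarrow> (real \<Rightarrow> real \<Rightarrow> 'a \<Rightarrow> int^'n)
   \<Rightarrow> (nat \<Rightarrow> real \<Rightarrow> real \<Rightarrow> 'a \<Rightarrow> nat) \<Rightarrow> 'a \<Rightarrow> bool" where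
  "rtc_solution m x0 \<nu> b cc E c X R \<omega> \<longleftrightarrow>
     (\<forall>t\<ge>0.
        (\<forall>j\<in>{1..m}.
           (\<lambda>s. rate cc c j * b j (X s c \<omega>)) integrable_on {0..t} \<and>
           R j t c \<omega> = poisson_count E j (integral {0..t} (\<lambda>s. rate cc c j * b j (X s c \<omega>))) \<omega>) \<and>
        X t c \<omega> = x0 + (\<Sum>j\<in>{1..m}. int (R j t c \<omega>) *s \<nu> j) \<and>
        (\<forall>i. X t c \<omega> $ i \<ge> 0))"

definition unconsuming :: "(nat \<Rightarrow> int^'n) \<Rightarrow> nat \<Rightarrow> bool" where
  "unconsuming \<nu> j \<longleftrightarrow> (\<forall>i. \<nu> j $ i \<ge> 0)"

definition unconsuming_set :: "(nat \<Rightarrow> int^'n) \<Rightarrow> nat \<Rightarrow> nat set" where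
  "unconsuming_set \<nu> m = {j \<in> {1..m}. unconsuming \<nu> j}"

definition consuming_set :: "(nat \<Rightarrow> int^'n) \<Rightarrow> nat \<Rightarrow> nat set" where
  "consuming_set \<nu> m = {j \<in> {1..m}. \<not> unconsuming \<nu> j}"

text \<open>The set R_y, with xi in [0,\<infinity>)^C represented by functions vanishing off C.\<close>
definition reach_set :: "(nat \<Rightarrow> int^'n) \<Rightarrow> nat \<Rightarrow> real^'n \<Rightarrow> (nat \<Rightarrow> real) set" where
  "reach_set \<nu> m y =
     {\<xi>. (\<forall>j\<in>consuming_set \<nu> m. \<xi> j \<ge> 0) \<and> (\<forall>j. j \<notin> consuming_set \<nu> m \<longrightarrow> \<xi> j = 0) \<and>
          (\<forall>i. y $ i + (\<Sum>j\<in>consuming_set \<nu> m. real_of_int (\<nu> j $ i) * \<xi> j) \<ge> 0)}"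

end

theory Submission
  imports Defs
begin

lemma exp_sum_bound:
  fixes a :: "'b \<Rightarrow> real"
  assumes "finite U" "\<And>j. j \<in> U \<Longrightarrow> a j \<ge> 0"
  shows "exp (\<Sum>j\<in>U. a j) \<le> 1 + (\<Sum>j\<in>U. exp (real (card U) * a j))"
proof (cases "U = {}")
  case True then show ?thesis by simp
next
  case False
  obtain j0 where j0: "j0 \<in> U" "\<forall>j\<in>U. a j \<le> a j0"
    using Max_in[of "a ` U"] assms(1) False
    by (metis (no_types, lifting) Max_ge finite_imageI image_iff image_is_empty)
  have "(\<Sum>j\<in>U. a j) \<le> (\<Sum>j\<in>U. a j0)" using j0 by (intro sum_mono) auto
  also have "\<dots> = real (card U) * a j0" by simp
  finally have "exp (\<Sum>j\<in>U. a j) \<le> exp (real (card U) * a j0)" by simp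
  also have "\<dots> \<le> (\<Sum>j\<in>U. exp (real (card U) * a j))"
    using j0(1) assms(1) by (intro member_le_sum) auto
  finally show ?thesis by simp
qed

lemma lin_bound:
  fixes y :: "real^'n"
  assumes B: "\<forall>\<xi>\<in>reach_set \<nu> m (\<chi> i. 1). \<xi> 1 \<le> B"
    and y: "\<forall>i. y $ i \<ge> 0" and xi: "\<xi> \<in> reach_set \<nu> m y"
  shows "\<xi> 1 \<le> B * (1 + (\<Sum>i\<in>UNIV. y $ i))"
proof -
  define t where "t = 1 + (\<Sum>i\<in>UNIV. y $ i)"
  have t0: "t \<ge> 1" unfolding t_def using y by (simp add: sum_nonneg)
  have yt: "y $ i \<le> t" for i
  proof -
    have "y $ i \<le> (\<Sum>i\<in>UNIV. y $ i)" using y by (intro member_le_sum) auto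
    then show ?thesis unfolding t_def by simp
  qed
  define \<eta> where "\<eta> = (\<lambda>j. \<xi> j / t)"
  have "\<eta> \<in> reach_set \<nu> m (\<chi> i. 1)"
  proof -
    have "1 + (\<Sum>j\<in>consuming_set \<nu> m. real_of_int (\<nu> j $ i) * \<eta> j) \<ge> 0" for i
    proof -
      have h: "y $ i + (\<Sum>j\<in>consuming_set \<nu> m. real_of_int (\<nu> j $ i) * \<xi> j) \<ge> 0"
        using xi unfolding reach_set_def by auto
      have "(\<Sum>j\<in>consuming_set \<nu> m. real_of_int (\<nu> j $ i) * \<eta> j)
           = (\<Sum>j\<in>consuming_set \<nu> m. real_of_int (\<nu> j $ i) * \<xi> j) / t"
        unfolding \<eta>_def by (simp add: sum_divide_distrib)
      moreover have "(\<Sum>j\<in>consuming_set \<nu> m. real_of_int (\<nu> j $ i) * \<xi> j) / t \<ge> -1"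
        using h yt[of i] t0 by (simp add: divide_simps)
      ultimately show ?thesis by simp
    qed
    then show ?thesis using xi t0 unfolding reach_set_def \<eta>_def by auto
  qed
  then have "\<xi> 1 / t \<le> B" using B unfolding \<eta>_def by auto
  then show ?thesis using t0 unfolding t_def by (simp add: divide_simps)
qed

theorem mainTheorem6:
  fixes M :: "'a measure" and E :: "nat \<times> nat \<Rightarrow> 'a \<Rightarrow> real"
    and m :: nat and x0 :: "int^'n" and \<nu> :: "nat \<Rightarrow> int^'n"
    and b :: "nat \<Rightarrow> int^'n \<Rightarrow> real" and cc :: "nat \<Rightarrow> real"
    and X :: "real \<Rightarrow> real \<Rightarrow> 'a \<Rightarrow> int^'n" and R :: "nat \<Rightarrow> real \<Rightarrow> real \<Rightarrow> 'a \<Rightarrow> nat"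
    and T cstar :: real
  assumes poisson: "unit_poisson_family M E m"
    and m_pos: "1 \<le> m"
    and x0_nonneg: "\<forall>i. x0 $ i \<ge> 0"
    and cc_pos: "\<forall>j\<in>{1..m}. cc j > 0"
    and b_nonneg: "\<forall>j\<in>{1..m}. \<forall>x. (\<forall>i. x $ i \<ge> 0) \<longrightarrow> b j x \<ge> 0"
    and R_meas: "\<forall>c>0. \<forall>j\<in>{1..m}. \<forall>t\<ge>0. R j t c \<in> measurable M (count_space UNIV)"
    and nonexplosive_rtc: "\<forall>c>0. AE \<omega> in M. rtc_solution m x0 \<nu> b cc E c X R \<omega>"
    and T_pos: "T > 0" and cstar_pos: "cstar > 0"
    and prop1: "\<forall>j\<in>unconsuming_set \<nu> m. \<exists>\<epsilon>>0.
                  (\<integral>\<^sup>+ \<omega>. ennreal (exp (\<epsilon> * real (R j T cstar \<omega>))) \<partial>M) < \<infinity>"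
    and cond_b: "1 \<in> unconsuming_set \<nu> m \<or>
                 (1 \<in> consuming_set \<nu> m \<and>
                  (\<forall>y::real^'n. (\<forall>i. y $ i \<ge> 0) \<longrightarrow> bdd_above ((\<lambda>\<xi>. \<xi> 1) ` reach_set \<nu> m y)))"
  shows "\<exists>\<epsilon>>0. (\<integral>\<^sup>+ \<omega>. ennreal (((cstar + \<epsilon>) / cstar) ^ R 1 T cstar \<omega>) \<partial>M) < \<infinity>"
proof -
  interpret prob_space M using poisson unfolding unit_poisson_family_def by auto
  have AEsol: "AE \<omega> in M. rtc_solution m x0 \<nu> b cc E cstar X R \<omega>"
    using nonexplosive_rtc cstar_pos by auto
  have Rmeas: "\<And>j. j \<in> {1..m} \<Longrightarrow> (\<lambda>\<omega>. f (R j T cstar \<omega>)) \<in> borel_measurable M" for f :: "nat \<Rightarrow> ennreal"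
    using R_meas cstar_pos T_pos
    by (intro measurable_compose[of "R j T cstar" M "count_space UNIV" f borel for j]) auto
  from cond_b show ?thesis
  proof (elim disjE)
    assume h1: "1 \<in> unconsuming_set \<nu> m"
    obtain e where e: "e > 0" and fin: "(\<integral>\<^sup>+ \<omega>. ennreal (exp (e * real (R 1 T cstar \<omega>))) \<partial>M) < \<infinity>"
      using prop1 h1 by blast
    define eps where "eps = cstar * (exp e - 1)"
    have eps0: "eps > 0" unfolding eps_def using e cstar_pos by simp
    have q: "(cstar + eps) / cstar = exp e" unfolding eps_def using cstar_pos by (simp add: field_simps)
    have eq: "((cstar + eps) / cstar) ^ R 1 T cstar \<omega> = exp (e * real (R 1 T cstar \<omega>))" for \<omega>
      unfolding q by (simp add: exp_of_nat_mult[symmetric] mult.commute)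
    have "(\<integral>\<^sup>+ \<omega>. ennreal (((cstar + eps) / cstar) ^ R 1 T cstar \<omega>) \<partial>M)
          = (\<integral>\<^sup>+ \<omega>. ennreal (exp (e * real (R 1 T cstar \<omega>))) \<partial>M)" by (simp only: eq)
    then show ?thesis using fin eps0 by auto
  next
    assume h2: "1 \<in> consuming_set \<nu> m \<and>
                  (\<forall>y::real^'n. (\<forall>i. y $ i \<ge> 0) \<longrightarrow> bdd_above ((\<lambda>\<xi>. \<xi> 1) ` reach_set \<nu> m y))"
    have "bdd_above ((\<lambda>\<xi>. \<xi> 1) ` reach_set \<nu> m (\<chi> i. 1))" using h2 by auto
    then obtain B where B: "\<forall>\<xi>\<in>reach_set \<nu> m (\<chi> i. 1). \<xi> 1 \<le> B"
      unfolding bdd_above_def by auto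
    have "(\<lambda>_. 0) \<in> reach_set \<nu> m (\<chi> i. 1)" unfolding reach_set_def by auto
    then have B0: "B \<ge> 0" using B by fastforce
    define U where "U = unconsuming_set \<nu> m"
    have finU: "finite U" unfolding U_def unconsuming_set_def by auto
    have U1m: "U \<subseteq> {1..m}" unfolding U_def unconsuming_set_def by auto
    obtain eps where eps: "\<forall>j\<in>U. eps j > 0 \<and> (\<integral>\<^sup>+ \<omega>. ennreal (exp (eps j * real (R j T cstar \<omega>))) \<partial>M) < \<infinity>"
      using prop1 unfolding U_def by metis
    define k where "k = real (card U)"
    define K where "K j = B * (\<Sum>i\<in>UNIV. real_of_int (\<nu> j $ i))" for j
    define K0 where "K0 = B * (1 + (\<Sum>i\<in>UNIV. real_of_int (x0 $ i)))"
    have K0: "K j \<ge> 0" if "j \<in> U" for j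
      using that B0 unfolding K_def U_def unconsuming_set_def unconsuming_def
      by (auto intro!: mult_nonneg_nonneg sum_nonneg)
    have k0: "k \<ge> 0" unfolding k_def by simp
    define \<delta> where "\<delta> = Min (insert 1 ((\<lambda>j. eps j / (k * K j + 1)) ` U))"
    have d0: "\<delta> > 0" unfolding \<delta>_def using finU eps K0 k0
      by (auto intro!: divide_pos_pos add_nonneg_pos)
    have dle: "k * (\<delta> * K j) \<le> eps j" if "j \<in> U" for j
    proof -
      have pos: "k * K j + 1 > 0" using K0[OF that] k0 by (simp add: add_nonneg_pos)
      have "\<delta> \<le> eps j / (k * K j + 1)" unfolding \<delta>_def using finU that by (intro Min_le) auto
      then have "\<delta> * (k * K j + 1) \<le> eps j" using pos by (simp add: le_divide_eq)
      moreover have "k * (\<delta> * K j) \<le> \<delta> * (k * K j + 1)" using d0 by (simp add: algebra_simps)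
      ultimately show ?thesis by linarith
    qed
    have ptw: "AE \<omega> in M. real (R 1 T cstar \<omega>) \<le> K0 + (\<Sum>j\<in>U. K j * real (R j T cstar \<omega>))"
      using AEsol
    proof eventually_elim
      case (elim \<omega>)
      have XT: "X T cstar \<omega> = x0 + (\<Sum>j\<in>{1..m}. int (R j T cstar \<omega>) *s \<nu> j)"
        and Xn: "\<forall>i. X T cstar \<omega> $ i \<ge> 0"
        using elim T_pos unfolding rtc_solution_def by (meson less_imp_le)+
      define C where "C = consuming_set \<nu> m"
      have UC: "{1..m} = U \<union> C" "U \<inter> C = {}" "finite C"
        unfolding U_def C_def unconsuming_set_def consuming_set_def by auto
      define y :: "real^'n" where
        "y = (\<chi> i. real_of_int (x0 $ i) + (\<Sum>j\<in>U. real (R j T cstar \<omega>) * real_of_int (\<nu> j $ i)))"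
      define \<xi> where "\<xi> j = (if j \<in> C then real (R j T cstar \<omega>) else 0)" for j
      have y0: "\<forall>i. y $ i \<ge> 0"
        using x0_nonneg unfolding y_def U_def unconsuming_set_def unconsuming_def
        by (auto intro!: add_nonneg_nonneg sum_nonneg)
      have xr: "\<xi> \<in> reach_set \<nu> m y"
        unfolding reach_set_def
      proof (intro CollectI conjI allI ballI impI)
        fix i
        have "real_of_int (X T cstar \<omega> $ i) = real_of_int (x0 $ i) +
               (\<Sum>j\<in>{1..m}. real (R j T cstar \<omega>) * real_of_int (\<nu> j $ i))"
          unfolding XT by simp
        also have "\<dots> = y $ i + (\<Sum>j\<in>C. real_of_int (\<nu> j $ i) * \<xi> j)"
          unfolding y_def \<xi>_def UC(1) using UC finU
          by (simp add: sum.union_disjoint mult.commute)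
        finally show "y $ i + (\<Sum>j\<in>consuming_set \<nu> m. real_of_int (\<nu> j $ i) * \<xi> j) \<ge> 0"
          using Xn unfolding C_def by (metis of_int_0_le_iff)
      qed (auto simp: \<xi>_def C_def)
      have "\<xi> 1 \<le> B * (1 + (\<Sum>i\<in>UNIV. y $ i))" by (rule lin_bound[OF B y0 xr])
      moreover have "\<xi> 1 = real (R 1 T cstar \<omega>)" using h2 unfolding \<xi>_def C_def by auto
      moreover have "B * (1 + (\<Sum>i\<in>UNIV. y $ i)) = K0 + (\<Sum>j\<in>U. K j * real (R j T cstar \<omega>))"
      proof -
        have "(\<Sum>i\<in>UNIV. y $ i) = (\<Sum>i\<in>UNIV. real_of_int (x0 $ i)) +
              (\<Sum>j\<in>U. real (R j T cstar \<omega>) * (\<Sum>i\<in>UNIV. real_of_int (\<nu> j $ i)))"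
          unfolding y_def by (simp add: sum.distrib sum_distrib_left sum.swap[of _ U])
        then show ?thesis unfolding K0_def K_def
          by (simp add: algebra_simps sum_distrib_left)
      qed
      ultimately show ?case by simp
    qed
    define \<epsilon> where "\<epsilon> = cstar * (exp \<delta> - 1)"
    have eps0: "\<epsilon> > 0" unfolding \<epsilon>_def using d0 cstar_pos by simp
    have q: "(cstar + \<epsilon>) / cstar = exp \<delta>" unfolding \<epsilon>_def using cstar_pos by (simp add: field_simps)
    define F where "F j \<omega> = ennreal (exp (eps j * real (R j T cstar \<omega>)))" for j \<omega>
    have bnd: "AE \<omega> in M. ennreal (((cstar + \<epsilon>) / cstar) ^ R 1 T cstar \<omega>)
                 \<le> ennreal (exp (\<delta> * K0)) * (1 + (\<Sum>j\<in>U. F j \<omega>))"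
      using ptw
    proof eventually_elim
      case (elim \<omega>)
      let ?a = "\<lambda>j. \<delta> * K j * real (R j T cstar \<omega>)"
      have "((cstar + \<epsilon>) / cstar) ^ R 1 T cstar \<omega> = exp (\<delta> * real (R 1 T cstar \<omega>))"
        unfolding q by (simp add: exp_of_nat_mult[symmetric] mult.commute)
      also have "\<dots> \<le> exp (\<delta> * K0 + (\<Sum>j\<in>U. ?a j))"
      proof -
        have "\<delta> * real (R 1 T cstar \<omega>) \<le> \<delta> * (K0 + (\<Sum>j\<in>U. K j * real (R j T cstar \<omega>)))"
          using elim d0 by (intro mult_left_mono) auto
        also have "\<dots> = \<delta> * K0 + (\<Sum>j\<in>U. ?a j)"
          by (simp add: distrib_left sum_distrib_left mult.assoc)
        finally show ?thesis by simp
      qed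
      also have "\<dots> = exp (\<delta> * K0) * exp (\<Sum>j\<in>U. ?a j)" by (simp add: exp_add)
      also have "\<dots> \<le> exp (\<delta> * K0) * (1 + (\<Sum>j\<in>U. exp (k * ?a j)))"
        unfolding k_def using K0 d0 finU
        by (intro mult_left_mono exp_sum_bound) auto
      also have "\<dots> \<le> exp (\<delta> * K0) * (1 + (\<Sum>j\<in>U. exp (eps j * real (R j T cstar \<omega>))))"
      proof -
        have "k * ?a j \<le> eps j * real (R j T cstar \<omega>)" if "j \<in> U" for j
        proof -
          have "k * (\<delta> * K j) * real (R j T cstar \<omega>) \<le> eps j * real (R j T cstar \<omega>)"
            using dle[OF that] by (intro mult_right_mono) auto
          then show ?thesis by (simp add: mult.assoc)
        qed
        then show ?thesis by (intro mult_left_mono add_left_mono sum_mono) auto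
      qed
      finally have r: "((cstar + \<epsilon>) / cstar) ^ R 1 T cstar \<omega>
          \<le> exp (\<delta> * K0) * (1 + (\<Sum>j\<in>U. exp (eps j * real (R j T cstar \<omega>))))" .
      have ee: "ennreal (exp (\<delta> * K0) * (1 + (\<Sum>j\<in>U. exp (eps j * real (R j T cstar \<omega>)))))
            = ennreal (exp (\<delta> * K0)) * (1 + (\<Sum>j\<in>U. F j \<omega>))"
        unfolding F_def by (simp add: ennreal_mult' ennreal_plus sum_nonneg)
      show ?case using ennreal_leI[OF r] by (simp only: ee)
    qed
    have Fm: "F j \<in> borel_measurable M" if "j \<in> U" for j
    proof -
      have "j \<in> {1..m}" using that U1m by auto
      then show ?thesis unfolding F_def by (rule Rmeas)
    qed
    have "(\<integral>\<^sup>+ \<omega>. ennreal (((cstar + \<epsilon>) / cstar) ^ R 1 T cstar \<omega>) \<partial>M)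
          \<le> (\<integral>\<^sup>+ \<omega>. ennreal (exp (\<delta> * K0)) * (1 + (\<Sum>j\<in>U. F j \<omega>)) \<partial>M)"
      by (rule nn_integral_mono_AE[OF bnd])
    also have "\<dots> = ennreal (exp (\<delta> * K0)) * (emeasure M (space M) + (\<Sum>j\<in>U. integral\<^sup>N M (F j)))"
    proof -
      have m1: "(\<lambda>\<omega>. \<Sum>j\<in>U. F j \<omega>) \<in> borel_measurable M"
        using Fm by (rule borel_measurable_sum)
      have m2: "(\<lambda>\<omega>. 1 + (\<Sum>j\<in>U. F j \<omega>)) \<in> borel_measurable M"
        using m1 by measurable
      have e1: "(\<integral>\<^sup>+ \<omega>. ennreal (exp (\<delta> * K0)) * (1 + (\<Sum>j\<in>U. F j \<omega>)) \<partial>M)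
            = ennreal (exp (\<delta> * K0)) * (\<integral>\<^sup>+ \<omega>. (1 + (\<Sum>j\<in>U. F j \<omega>)) \<partial>M)"
        by (rule nn_integral_cmult[OF m2])
      have e2: "(\<integral>\<^sup>+ \<omega>. (1 + (\<Sum>j\<in>U. F j \<omega>)) \<partial>M)
            = (\<integral>\<^sup>+ \<omega>. 1 \<partial>M) + (\<integral>\<^sup>+ \<omega>. (\<Sum>j\<in>U. F j \<omega>) \<partial>M)"
        by (rule nn_integral_add[OF _ m1]) simp
      have e3: "(\<integral>\<^sup>+ \<omega>. (\<Sum>j\<in>U. F j \<omega>) \<partial>M) = (\<Sum>j\<in>U. integral\<^sup>N M (F j))"
        by (rule nn_integral_sum[OF Fm])
      have e4: "(\<integral>\<^sup>+ \<omega>. 1 \<partial>M) = emeasure M (space M)"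
        by (simp add: nn_integral_const)
      show ?thesis unfolding e1 e2 e3 e4 ..
    qed
    also have "\<dots> < \<infinity>"
    proof -
      have "(\<Sum>j\<in>U. integral\<^sup>N M (F j)) < \<infinity>"
        using eps finU unfolding F_def by (simp add: ennreal_sum_less_top)
      moreover have "emeasure M (space M) < \<infinity>" by (simp add: emeasure_space_1)
      ultimately show ?thesis by (simp add: ennreal_mult_less_top)
    qed
    finally show ?thesis using eps0 by blast
  qed
qed

end
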